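(* The multiplicity of $\vartheta[m]$ along $q_\nu=0$ ($\nu=0,2,1$ respectively) in the coordinates $$q_0=e^{2\pi i (z_0+z_1)/8},\quad q_2=e^{2\pi i (z_2+z_1)/8},\quad q_1=e^{-2\pi i z_1/8}$$ is $$a_1,\quad a_2,\quad a_1+a_2-2a_1a_2,\qquad m={a\choose b},\ a={a_1\choose a_2}.$$
   Context: Genus two, $Z=\begin{pmatrix}z_0&z_1\\ z_1&z_2\end{pmatrix}\in\mathbb{H}_2$. For a theta characteristic $m={a\choose b}$, $a,b\in\{0,1\}^2$, the theta constant is $\vartheta[m](Z)=\sum_{g\in\mathbb{Z}^2}e^{\pi i(Z[g+a/2]+{}^tb(g+a/2))}$. These are periodic under $Z\mapsto Z+8S$, $S$ integral symmetric, so they can be written as Laurent series in the normal coordinates $q_0,q_1,q_2$ above; these are in fact power series, hence extend holomorphically to the completed Reinhardt domain $\tilde D=D\cup\{q\in\mathbb{C}^3;\ q_0q_1q_2=0\}$, where $D$ is the image of $\mathbb{H}_2$ under $Z\mapsto(q_0,q_1,q_2)$. The multiplicity refers to the vanishing order of this power series along the divisor $q_\nu=0$ (with $a_1,a_2\in\{0,1\}\subset\mathbb{Z}$). *)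

theory Defs
  imports "HOL-Analysis.Analysis"
begin

text \<open>A point Z = ((z0, z1), (z1, z2)) of the Siegel upper half space of genus two is
represented by the triple (z0, z1, z2).\<close>

definition siegel_H2 :: "(complex \<times> complex \<times> complex) set" where
  "siegel_H2 = {(z0, z1, z2). Im z0 > 0 \<and> Im z0 * Im z2 - (Im z1)^2 > 0}"

definition quadZ :: "complex \<times> complex \<times> complex \<Rightarrow> real \<Rightarrow> real \<Rightarrow> complex" where
  "quadZ Z x1 x2 = (case Z of (z0, z1, z2) \<Rightarrow>
      z0 * of_real (x1^2) + 2 * z1 * of_real (x1 * x2) + z2 * of_real (x2^2))"

definition theta_const :: "int \<Rightarrow> int \<Rightarrow> int \<Rightarrow> int \<Rightarrow> complex \<times> complex \<times> complex \<Rightarrow> complex" where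
  "theta_const a1 a2 b1 b2 Z =
     (\<Sum>\<^sub>\<infinity>(g1, g2) \<in> (UNIV :: (int \<times> int) set).
        (let x1 = real_of_int g1 + real_of_int a1 / 2; x2 = real_of_int g2 + real_of_int a2 / 2 in
         exp (pi * \<i> * (quadZ Z x1 x2 + of_real (real_of_int b1 * x1 + real_of_int b2 * x2)))))"

definition qcoords :: "complex \<times> complex \<times> complex \<Rightarrow> complex \<times> complex \<times> complex" where
  "qcoords Z = (case Z of (z0, z1, z2) \<Rightarrow>
     (exp (2 * pi * \<i> * (z0 + z1) / 8), exp (- 2 * pi * \<i> * z1 / 8), exp (2 * pi * \<i> * (z2 + z1) / 8)))"

definition is_q_expansion :: "(nat \<times> nat \<times> nat \<Rightarrow> complex) \<Rightarrow> (complex \<times> complex \<times> complex \<Rightarrow> complex) \<Rightarrow> bool" where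
  "is_q_expansion c f \<longleftrightarrow>
     (\<forall>Z \<in> siegel_H2. case qcoords Z of (q0, q1, q2) \<Rightarrow>
        ((\<lambda>(k0, k1, k2). c (k0, k1, k2) * q0 ^ k0 * q1 ^ k1 * q2 ^ k2) has_sum f Z) UNIV)"

definition mult_q0 :: "(nat \<times> nat \<times> nat \<Rightarrow> complex) \<Rightarrow> nat" where
  "mult_q0 c = (LEAST k. \<exists>k1 k2. c (k, k1, k2) \<noteq> 0)"
definition mult_q1 :: "(nat \<times> nat \<times> nat \<Rightarrow> complex) \<Rightarrow> nat" where
  "mult_q1 c = (LEAST k. \<exists>k0 k2. c (k0, k, k2) \<noteq> 0)"
definition mult_q2 :: "(nat \<times> nat \<times> nat \<Rightarrow> complex) \<Rightarrow> nat" where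
  "mult_q2 c = (LEAST k. \<exists>k0 k1. c (k0, k1, k) \<noteq> 0)"

end

theory Submission
  imports Defs
begin


lemma U1:
  fixes d :: "nat \<Rightarrow> complex"
  assumes H: "\<And>z. 0 < norm z \<Longrightarrow> norm z < 1 \<Longrightarrow> ((\<lambda>n. d n * z ^ n) has_sum 0) UNIV"
  shows "d n = 0"
proof (induction n rule: less_induct)
  case (less n)
  have S: "(\<lambda>j. d (j + n) * z ^ j) sums 0" if z: "0 < norm z" "norm z < 1" for z
  proof -
    have "(\<lambda>i. d i * z ^ i) sums 0" using has_sum_imp_sums[OF H[OF z]] .
    from sums_split_initial_segment[OF this, of n]
    have "(\<lambda>i. d (i + n) * z ^ (i + n)) sums 0"
      using less by simp
    from sums_mult[OF this, of "inverse (z ^ n)"]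
    show ?thesis using z by (simp add: power_add field_simps)
  qed
  define g where "g = (\<lambda>z. \<Sum>j. d (j + n) * z ^ j)"
  have sh: "summable (\<lambda>j. d (j + n) * (1/2) ^ j)"
    using S[of "1/2"] by (auto simp: sums_iff)
  have cont: "isCont g 0" unfolding g_def
    by (rule isCont_powser[OF sh]) simp
  have g0: "g 0 = d n" unfolding g_def using powser_zero[of "\<lambda>j. d (j + n)"] by simp
  have ev: "\<forall>\<^sub>F z in at 0. g z = 0"
  proof -
    have "\<forall>\<^sub>F z in at (0::complex). z \<in> ball 0 1 - {0}"
      by (intro eventually_at_in_open) auto
    then show ?thesis
      by eventually_elim (use S in \<open>auto simp: g_def sums_iff\<close>)
  qed
  have "(g \<longlongrightarrow> g 0) (at 0)" using cont by (simp add: isCont_def)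
  moreover have "(g \<longlongrightarrow> 0) (at 0)"
    using tendsto_eventually[OF ev] by (simp add: tendsto_cong[OF ev])
  ultimately have "g 0 = 0" using tendsto_unique by (metis at_neq_bot)
  then show ?case using g0 by simp
qed



lemma UG:
  fixes d :: "nat \<times> 'a \<Rightarrow> complex" and T :: "'a \<Rightarrow> 'p \<Rightarrow> complex"
  assumes H: "\<And>z p. 0 < norm z \<Longrightarrow> norm z < 1 \<Longrightarrow> p \<in> P \<Longrightarrow>
     ((\<lambda>(n,k). d (n,k) * z ^ n * T k p) has_sum 0) UNIV"
    and p: "p \<in> P"
  shows "((\<lambda>k. d (n,k) * T k p) has_sum 0) UNIV"
proof -
  have sm: "(\<lambda>k. d (m,k) * T k p) summable_on UNIV" for m
  proof -
    have "(\<lambda>(n,k). (\<lambda>n k. d (n,k) * (1/2::complex) ^ n * T k p) n k) summable_on Sigma UNIV (\<lambda>_. UNIV)"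
      using H[of "1/2" p] p by (auto simp: summable_on_def)
    from summable_on_SigmaD1[OF this, of m]
    have "(\<lambda>k. d (m,k) * (1/2::complex) ^ m * T k p) summable_on UNIV" by simp
    from summable_on_cmult_right[OF this, of "2^m"]
    show ?thesis by (simp add: power_divide)
  qed
  define D where "D m = infsum (\<lambda>k. d (m,k) * T k p) UNIV" for m
  have "D m = 0" for m
  proof (rule U1[of D])
    fix z :: complex assume z: "0 < norm z" "norm z < 1"
    have "((\<lambda>(n,k). d (n,k) * z ^ n * T k p) has_sum 0) (Sigma UNIV (\<lambda>_. UNIV))"
      using H[OF z p] by simp
    then show "((\<lambda>n. D n * z ^ n) has_sum 0) UNIV"
    proof (rule has_sum_Sigma')
      fix n :: nat
      have "((\<lambda>k. d (n,k) * T k p) has_sum D n) UNIV"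
        unfolding D_def using sm by (rule has_sum_infsum)
      from has_sum_cmult_right[OF this, of "z^n"]
      show "((\<lambda>k. case (n,k) of (n,k) \<Rightarrow> d (n,k) * z ^ n * T k p) has_sum D n * z ^ n) UNIV"
        by (simp add: algebra_simps)
    qed
  qed
  then show ?thesis using has_sum_infsum[OF sm[of n]] D_def by simp
qed



definition "pd = {z::complex. 0 < norm z \<and> norm z < 1}"

lemma U3:
  fixes d :: "nat \<times> nat \<times> nat \<Rightarrow> complex"
  assumes H: "\<And>q0 q1 q2. q0 \<in> pd \<Longrightarrow> q1 \<in> pd \<Longrightarrow> q2 \<in> pd \<Longrightarrow>
     ((\<lambda>(k0,k1,k2). d (k0,k1,k2) * q0 ^ k0 * q1 ^ k1 * q2 ^ k2) has_sum 0) UNIV"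
  shows "d k = 0"
proof -
  obtain k0 k1 k2 where k: "k = (k0,k1,k2)" by (cases k) auto
  have 1: "((\<lambda>(k1,k2). d (k0,k1,k2) * (fst p ^ k1 * snd p ^ k2)) has_sum 0) UNIV"
    if "p \<in> pd \<times> pd" for p
  proof -
    have "((\<lambda>k. d (k0,k) * (case k of (k1, k2) \<Rightarrow> fst p ^ k1 * snd p ^ k2)) has_sum 0) UNIV"
    proof (rule UG[where P="pd \<times> pd" and T="\<lambda>k p. case k of (k1,k2) \<Rightarrow> fst p ^ k1 * snd p ^ k2", OF _ that])
      fix z :: complex and p assume z: "0 < norm z" "norm z < 1" and p: "p \<in> pd \<times> pd"
      show "((\<lambda>(n, k). d (n, k) * z ^ n * (case k of (k1, k2) \<Rightarrow> fst p ^ k1 * snd p ^ k2)) has_sum 0) UNIV"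
      proof -
        have e: "(\<lambda>(n, k). d (n, k) * z ^ n * (case k of (k1, k2) \<Rightarrow> fst p ^ k1 * snd p ^ k2))
           = (\<lambda>(k0,k1,k2). d (k0,k1,k2) * z ^ k0 * fst p ^ k1 * snd p ^ k2)"
          by (auto simp: fun_eq_iff mult.assoc)
        show ?thesis unfolding e using H[of z "fst p" "snd p"] z p by (auto simp: pd_def)
      qed
    qed
    moreover have "(\<lambda>k. d (k0,k) * (case k of (k1, k2) \<Rightarrow> fst p ^ k1 * snd p ^ k2)) =
       (\<lambda>(k1,k2). d (k0,k1,k2) * (fst p ^ k1 * snd p ^ k2))" by (auto simp: fun_eq_iff)
    ultimately show ?thesis by simp
  qed
  have 2: "((\<lambda>k2. d (k0,k1,k2) * q ^ k2) has_sum 0) UNIV" if "q \<in> pd" for q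
  proof (rule UG[where P="pd" and T="\<lambda>k2 q. q ^ k2", OF _ that])
    fix z :: complex and q assume z: "0 < norm z" "norm z < 1" and q: "q \<in> pd"
    show "((\<lambda>(n, k). d (k0, n, k) * z ^ n * q ^ k) has_sum 0) UNIV"
      using 1[of "(z,q)"] z q by (auto simp: pd_def mult.assoc)
  qed
  show ?thesis unfolding k
    by (rule U1[of "\<lambda>k2. d (k0,k1,k2)"]) (use 2 in \<open>auto simp: pd_def\<close>)
qed



definition "LL q = - 4 * \<i> * Ln q / of_real pi"

lemma LL_exp: "q \<noteq> 0 \<Longrightarrow> exp (2 * of_real pi * \<i> * LL q / 8) = q"
  unfolding LL_def by (simp add: field_simps)

lemma LL_Im: "q \<in> pd \<Longrightarrow> Im (LL q) > 0"
proof -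
  assume q: "q \<in> pd"
  then have "Re (Ln q) < 0" using Re_Ln[of q] by (simp add: pd_def ln_less_zero)
  then have "4 * Re (Ln q) * pi < 0" by (simp add: mult_neg_pos)
  then have "4 * Re (Ln q) * pi / pi^2 < 0" by (simp add: divide_neg_pos)
  then show ?thesis unfolding LL_def by (simp add: Im_divide)
qed

lemma PD:
  assumes "q0 \<in> pd" "q1 \<in> pd" "q2 \<in> pd"
  shows "\<exists>Z\<in>siegel_H2. qcoords Z = (q0,q1,q2)"
proof
  let ?Z = "(LL q0 + LL q1, - LL q1, LL q2 + LL q1)"
  have t: "Im (LL q0) > 0" "Im (LL q1) > 0" "Im (LL q2) > 0" using LL_Im assms by auto
  have nz: "q0 \<noteq> 0" "q1 \<noteq> 0" "q2 \<noteq> 0" using assms by (auto simp: pd_def)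
  show "qcoords ?Z = (q0,q1,q2)"
    using LL_exp[OF nz(1)] LL_exp[OF nz(2)] LL_exp[OF nz(3)]
    by (simp add: qcoords_def mult_ac)
  show "?Z \<in> siegel_H2"
    using t unfolding siegel_H2_def
    by (auto simp: algebra_simps power2_eq_square intro!: add_pos_pos mult_pos_pos)
qed



lemma uniq:
  assumes "is_q_expansion c f" "is_q_expansion c' f"
  shows "c = c'"
proof -
  have "(\<lambda>k. c k - c' k) k = 0" for k
  proof (rule U3)
    fix q0 q1 q2 assume q: "q0 \<in> pd" "q1 \<in> pd" "q2 \<in> pd"
    obtain Z where Z: "Z \<in> siegel_H2" "qcoords Z = (q0,q1,q2)" using PD[OF q] by blast
    have h1: "((\<lambda>(k0, k1, k2). c (k0, k1, k2) * q0 ^ k0 * q1 ^ k1 * q2 ^ k2) has_sum f Z) UNIV"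
      using assms(1) Z unfolding is_q_expansion_def by fastforce
    have h2: "((\<lambda>(k0, k1, k2). c' (k0, k1, k2) * q0 ^ k0 * q1 ^ k1 * q2 ^ k2) has_sum f Z) UNIV"
      using assms(2) Z unfolding is_q_expansion_def by fastforce
    have e: "(\<lambda>x. (case x of (k0, k1, k2) \<Rightarrow> c (k0, k1, k2) * q0 ^ k0 * q1 ^ k1 * q2 ^ k2) +
       - (case x of (k0, k1, k2) \<Rightarrow> c' (k0, k1, k2) * q0 ^ k0 * q1 ^ k1 * q2 ^ k2)) =
      (\<lambda>(k0, k1, k2). (c (k0, k1, k2) - c' (k0, k1, k2)) * q0 ^ k0 * q1 ^ k1 * q2 ^ k2)"
      by (auto simp: fun_eq_iff algebra_simps)
    from has_sum_add[OF h1 has_sum_uminusI[OF h2]]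
    show "((\<lambda>(k0, k1, k2). (c (k0, k1, k2) - c' (k0, k1, k2)) * q0 ^ k0 * q1 ^ k1 * q2 ^ k2) has_sum 0) UNIV"
      unfolding e by simp
  qed
  then show ?thesis by auto
qed



definition tt :: "int \<Rightarrow> int \<Rightarrow> int \<Rightarrow> int \<Rightarrow> complex \<times> complex \<times> complex \<Rightarrow> int \<times> int \<Rightarrow> complex" where
 "tt a1 a2 b1 b2 Z = (\<lambda>(g1, g2).
        (let x1 = real_of_int g1 + real_of_int a1 / 2; x2 = real_of_int g2 + real_of_int a2 / 2 in
         exp (pi * \<i> * (quadZ Z x1 x2 + of_real (real_of_int b1 * x1 + real_of_int b2 * x2)))))"

lemma theta_tt: "theta_const a1 a2 b1 b2 Z = infsum (tt a1 a2 b1 b2 Z) UNIV"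
  unfolding theta_const_def tt_def ..

definition eps :: "int \<Rightarrow> int \<Rightarrow> int \<Rightarrow> int \<Rightarrow> int \<times> int \<Rightarrow> complex" where
 "eps a1 a2 b1 b2 g = (case g of (g1,g2) \<Rightarrow> exp (pi * \<i> * of_real (real_of_int b1 * (real_of_int g1 + real_of_int a1 / 2)
      + real_of_int b2 * (real_of_int g2 + real_of_int a2 / 2))))"

definition phi :: "int \<Rightarrow> int \<Rightarrow> int \<times> int \<Rightarrow> nat \<times> nat \<times> nat" where
 "phi a1 a2 g = (case g of (g1,g2) \<Rightarrow> (nat ((2*g1+a1)^2), nat ((2*(g1-g2)+a1-a2)^2), nat ((2*g2+a2)^2)))"

definition qpow :: "complex \<times> complex \<times> complex \<Rightarrow> nat \<times> nat \<times> nat \<Rightarrow> complex" where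
 "qpow q k = (case q of (q0,q1,q2) \<Rightarrow> case k of (k0,k1,k2) \<Rightarrow> q0^k0*q1^k1*q2^k2)"

lemma ofnatsq: "(of_nat (nat (y^2)) :: complex) = (of_int y)^2"
proof -
  have "(of_nat (nat (y^2)) :: complex) = of_int (y^2)" by (rule of_nat_nat) simp
  then show ?thesis by simp
qed

lemma tt_eq: "tt a1 a2 b1 b2 Z g = eps a1 a2 b1 b2 g * qpow (qcoords Z) (phi a1 a2 g)"
proof -
  obtain z0 z1 z2 where Z: "Z = (z0,z1,z2)" by (cases Z) auto
  obtain g1 g2 where g: "g = (g1,g2)" by (cases g) auto
  define X1 :: complex where "X1 = of_int g1 + of_int a1 / 2"
  define X2 :: complex where "X2 = of_int g2 + of_int a2 / 2"
  have k0: "(of_nat (nat ((2*g1+a1)^2)) :: complex) = 4 * X1^2"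
    unfolding X1_def by (simp only: ofnatsq) (simp add: power2_eq_square algebra_simps)
  have k1: "(of_nat (nat ((2*(g1-g2)+a1-a2)^2)) :: complex) = 4 * (X1 - X2)^2"
    unfolding X1_def X2_def by (simp only: ofnatsq) (simp add: power2_eq_square algebra_simps)
  have k2: "(of_nat (nat ((2*g2+a2)^2)) :: complex) = 4 * X2^2"
    unfolding X2_def by (simp only: ofnatsq) (simp add: power2_eq_square algebra_simps)
  let ?w0 = "2 * of_real pi * \<i> * (z0 + z1) / 8" and ?w1 = "- 2 * of_real pi * \<i> * z1 / 8"
    and ?w2 = "2 * of_real pi * \<i> * (z2 + z1) / 8"
  have q: "qpow (qcoords Z) (phi a1 a2 g) =
     exp (of_nat (nat ((2*g1+a1)^2)) * ?w0) * exp (of_nat (nat ((2*(g1-g2)+a1-a2)^2)) * ?w1)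
      * exp (of_nat (nat ((2*g2+a2)^2)) * ?w2)"
    unfolding exp_of_nat_mult by (simp add: qpow_def qcoords_def phi_def Z g mult_ac)
  have alg: "of_nat (nat ((2*g1+a1)^2)) * ?w0 + of_nat (nat ((2*(g1-g2)+a1-a2)^2)) * ?w1
      + of_nat (nat ((2*g2+a2)^2)) * ?w2 = of_real pi * \<i> * (z0 * X1^2 + 2 * z1 * (X1 * X2) + z2 * X2^2)"
    unfolding k0 k1 k2 by (simp add: power2_eq_square field_simps)
  have "tt a1 a2 b1 b2 Z g = eps a1 a2 b1 b2 g * exp (of_real pi * \<i> * (z0 * X1^2 + 2 * z1 * (X1 * X2) + z2 * X2^2))"
    unfolding tt_def eps_def Z g X1_def X2_def
    by (simp add: Let_def quadZ_def exp_add[symmetric] algebra_simps)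
  also have "\<dots> = eps a1 a2 b1 b2 g * qpow (qcoords Z) (phi a1 a2 g)"
    unfolding q alg[symmetric] exp_add by simp
  finally show ?thesis .
qed



lemma geo_int:
  fixes r :: real assumes r: "0 \<le> r" "r < 1"
  shows "(\<lambda>n::int. r ^ nat \<bar>n\<bar>) summable_on UNIV"
proof -
  have g: "(\<lambda>n::nat. r ^ n) summable_on UNIV"
    by (rule summable_nonneg_imp_summable_on) (use r in \<open>simp_all add: summable_geometric\<close>)
  have i1: "inj_on int UNIV" by (simp add: inj_on_def)
  have i2: "inj_on (\<lambda>n::nat. - int n) UNIV" by (simp add: inj_on_def)
  have 1: "(\<lambda>n::int. r ^ nat \<bar>n\<bar>) summable_on range int"
    using summable_on_reindex[OF i1, of "\<lambda>n::int. r ^ nat \<bar>n\<bar>"] g by (simp add: o_def)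
  have 2: "(\<lambda>n::int. r ^ nat \<bar>n\<bar>) summable_on range (\<lambda>n. - int n)"
    using summable_on_reindex[OF i2, of "\<lambda>n::int. r ^ nat \<bar>n\<bar>"] g by (simp add: o_def)
  have "x \<in> range int \<union> range (\<lambda>n. - int n)" for x :: int
  proof (cases "x \<ge> 0")
    case True
    then have "x = int (nat x)" by simp
    then show ?thesis by blast
  next
    case False
    then have "x = - int (nat (-x))" by simp
    then show ?thesis by blast
  qed
  then have "UNIV = range int \<union> range (\<lambda>n. - int n)" by blast
  then show ?thesis using summable_on_union[OF 1 2] by simp
qed



lemma gauss_int:
  fixes c s :: real assumes c: "c > 0" and s: "0 \<le> s" "s \<le> 1/2"
  shows "(\<lambda>n::int. exp (- c * (real_of_int n + s)^2)) summable_on UNIV"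
proof (rule summable_on_comparison_test)
  show "(\<lambda>n::int. exp c * exp (-c) ^ nat \<bar>n\<bar>) summable_on UNIV"
    by (rule summable_on_cmult_right, rule geo_int) (use c in auto)
  fix n :: int
  show "0 \<le> exp (- c * (real_of_int n + s)^2)" by simp
  define x where "x = real_of_int n + s"
  have h1: "(x - 1/2)^2 = x^2 - x + 1/4" "(x + 1/2)^2 = x^2 + x + 1/4"
    by (simp_all add: power2_eq_square algebra_simps)
  have h2: "(x - 1/2)^2 \<ge> 0" "(x + 1/2)^2 \<ge> 0" by simp_all
  have sq: "(real_of_int n + s)^2 \<ge> \<bar>real_of_int n\<bar> - 1"
  proof (cases "n \<ge> 0")
    case True
    then show ?thesis using h1 h2 s unfolding x_def by simp
  next
    case False
    then show ?thesis using h1 h2 s unfolding x_def by simp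
  qed
  have e: "exp (-c) ^ nat \<bar>n\<bar> = exp (- c * \<bar>real_of_int n\<bar>)"
    by (simp add: exp_of_nat_mult[symmetric] mult_ac)
  show "exp (- c * (real_of_int n + s)^2) \<le> exp c * exp (-c) ^ nat \<bar>n\<bar>"
  proof -
    have "c * ((real_of_int n + s)^2 - (\<bar>real_of_int n\<bar> - 1)) \<ge> 0"
      using sq c by simp
    then have "- c * (real_of_int n + s)^2 \<le> c + - c * \<bar>real_of_int n\<bar>"
      by (simp add: algebra_simps)
    then show ?thesis unfolding e exp_add[symmetric] by simp
  qed
qed

lemma prod_summable:
  fixes u v :: "int \<Rightarrow> real"
  assumes "u summable_on UNIV" "v summable_on UNIV" "\<And>n. u n \<ge> 0" "\<And>n. v n \<ge> 0"
  shows "(\<lambda>(g1,g2). u g1 * v g2) summable_on UNIV"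
proof -
  have "Infinite_Set_Sum.abs_summable_on u UNIV" "Infinite_Set_Sum.abs_summable_on v UNIV"
    using assms by (auto simp: abs_summable_equivalent[symmetric] summable_on_iff_abs_summable_on_real[symmetric])
  from abs_summable_on_product[OF _ _ this]
  have "Infinite_Set_Sum.abs_summable_on (\<lambda>(x,y). u x * v y) (UNIV \<times> UNIV)" by simp
  then have "(\<lambda>x. \<bar>case x of (x, y) \<Rightarrow> u x * v y\<bar>) summable_on UNIV"
    by (simp add: abs_summable_equivalent[symmetric])
  moreover have "(\<lambda>x. \<bar>case x of (x, y) \<Rightarrow> u x * v y\<bar>) = (\<lambda>(g1,g2). u g1 * v g2)"
    using assms(3,4) by (auto simp: fun_eq_iff abs_mult)
  ultimately show ?thesis by simp
qed



lemma quad_bound: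
  fixes y0 y1 y2 x1 x2 :: real
  assumes y0: "y0 > 0" and det: "y0 * y2 - y1^2 > 0"
  defines "mu \<equiv> (y0 * y2 - y1^2) / (2 * (y0 + y2))"
  shows "mu > 0" "y0 * x1^2 + 2 * y1 * x1 * x2 + y2 * x2^2 \<ge> mu * x1^2 + mu * x2^2"
proof -
  have "y0 * y2 > 0" using det by (smt (verit) zero_le_power2)
  then have y2: "y2 > 0" using y0 by (simp add: zero_less_mult_iff)
  show mu: "mu > 0" unfolding mu_def using det y0 y2 by simp
  have "mu * (2 * (y0 + y2)) = y0 * y2 - y1^2" unfolding mu_def using y0 y2 by simp
  then have m1: "mu * (y0 + y2) * 2 = y0 * y2 - y1^2" by (simp add: algebra_simps)
  define A where "A = y0 - mu"
  define C where "C = y2 - mu"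
  have "mu * y2 * 2 \<le> y0 * y2" using m1 mu y0 by (smt (verit) mult_pos_pos zero_le_power2 distrib_left)
  then have "(mu * 2) * y2 \<le> y0 * y2" by (simp add: algebra_simps)
  then have "mu * 2 \<le> y0" by (simp only: mult_le_cancel_right_pos[OF y2])
  then have A: "A > 0" unfolding A_def using mu by simp
  have AC: "A * C - y1^2 \<ge> 0"
  proof -
    have "A * C - y1^2 = (y0 * y2 - y1^2) - mu * (y0 + y2) + mu^2"
      unfolding A_def C_def by (simp add: algebra_simps power2_eq_square)
    also have "\<dots> = mu * (y0 + y2) + mu^2" using m1 by simp
    finally show ?thesis using mu y0 y2 by simp
  qed
  have "A * (A * x1^2 + 2 * y1 * x1 * x2 + C * x2^2) = (A * x1 + y1 * x2)^2 + (A * C - y1^2) * x2^2"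
    by (simp add: algebra_simps power2_eq_square)
  also have "\<dots> \<ge> 0" using AC by simp
  finally have "A * x1^2 + 2 * y1 * x1 * x2 + C * x2^2 \<ge> 0"
    using A by (simp add: zero_le_mult_iff)
  then show "y0 * x1^2 + 2 * y1 * x1 * x2 + y2 * x2^2 \<ge> mu * x1^2 + mu * x2^2"
    unfolding A_def C_def by (simp add: algebra_simps)
qed

lemma norm_tt:
  "norm (tt a1 a2 b1 b2 (z0,z1,z2) (g1,g2)) =
     exp (- pi * (Im z0 * (real_of_int g1 + real_of_int a1 / 2)^2
        + 2 * Im z1 * (real_of_int g1 + real_of_int a1 / 2) * (real_of_int g2 + real_of_int a2 / 2)
        + Im z2 * (real_of_int g2 + real_of_int a2 / 2)^2))"
  unfolding tt_def by (simp add: Let_def quadZ_def norm_exp_eq_Re algebra_simps)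

lemma tt_summable:
  assumes Z: "Z \<in> siegel_H2" and a: "a1 \<in> {0,1}" "a2 \<in> {0,1}"
  shows "tt a1 a2 b1 b2 Z summable_on UNIV"
proof -
  obtain z0 z1 z2 where Zd: "Z = (z0,z1,z2)" by (cases Z) auto
  have y0: "Im z0 > 0" and det: "Im z0 * Im z2 - (Im z1)^2 > 0" using Z Zd by (auto simp: siegel_H2_def)
  define mu where "mu = (Im z0 * Im z2 - (Im z1)^2) / (2 * (Im z0 + Im z2))"
  have mu: "mu > 0" using quad_bound(1)[OF y0 det] mu_def by simp
  define u where "u g = exp (- (pi * mu) * (real_of_int g + real_of_int a1 / 2)^2)" for g :: int
  define v where "v g = exp (- (pi * mu) * (real_of_int g + real_of_int a2 / 2)^2)" for g :: int
  have s1: "0 \<le> real_of_int a1 / 2" "real_of_int a1 / 2 \<le> 1/2" using a by auto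
  have s2: "0 \<le> real_of_int a2 / 2" "real_of_int a2 / 2 \<le> 1/2" using a by auto
  have pm: "pi * mu > 0" using mu by simp
  have us: "u summable_on UNIV" unfolding u_def by (rule gauss_int[OF pm s1])
  have vs: "v summable_on UNIV" unfolding v_def by (rule gauss_int[OF pm s2])
  have P: "(\<lambda>(g1,g2). u g1 * v g2) summable_on UNIV"
    by (rule prod_summable[OF us vs]) (auto simp: u_def v_def)
  have "(\<lambda>g. norm (tt a1 a2 b1 b2 Z g)) summable_on UNIV"
  proof (rule Infinite_Sum.abs_summable_on_comparison_test'[OF P])
    fix g :: "int \<times> int"
    obtain g1 g2 where g: "g = (g1,g2)" by (cases g) auto
    define x1 where "x1 = real_of_int g1 + real_of_int a1 / 2"
    define x2 where "x2 = real_of_int g2 + real_of_int a2 / 2"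
    have qb: "Im z0 * x1^2 + 2 * Im z1 * x1 * x2 + Im z2 * x2^2 \<ge> mu * x1^2 + mu * x2^2"
      using quad_bound(2)[OF y0 det] mu_def by simp
    have "norm (tt a1 a2 b1 b2 Z g) = exp (- pi * (Im z0 * x1^2 + 2 * Im z1 * x1 * x2 + Im z2 * x2^2))"
      unfolding Zd g norm_tt x1_def x2_def ..
    also have "\<dots> \<le> exp (- pi * (mu * x1^2 + mu * x2^2))"
      using qb by simp
    also have "\<dots> = u g1 * v g2"
      unfolding u_def v_def x1_def[symmetric] x2_def[symmetric] exp_add[symmetric]
      by (simp add: algebra_simps)
    finally show "norm (tt a1 a2 b1 b2 Z g) \<le> (case g of (g1,g2) \<Rightarrow> u g1 * v g2)" using g by simp
  qed
  then show ?thesis by (simp add: summable_on_iff_abs_summable_on_complex)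
qed



definition fib :: "int \<Rightarrow> int \<Rightarrow> nat \<times> nat \<times> nat \<Rightarrow> (int \<times> int) set" where
  "fib a1 a2 k = {g. phi a1 a2 g = k}"

definition cth :: "int \<Rightarrow> int \<Rightarrow> int \<Rightarrow> int \<Rightarrow> nat \<times> nat \<times> nat \<Rightarrow> complex" where
  "cth a1 a2 b1 b2 k = sum (eps a1 a2 b1 b2) (fib a1 a2 k)"

lemma abs_le_sq: "\<bar>y::int\<bar> \<le> y^2"
proof (cases "y = 0")
  case False
  then have "\<bar>y\<bar> * 1 \<le> \<bar>y\<bar> * \<bar>y\<bar>" by (intro mult_left_mono) auto
  then show ?thesis by (simp add: power2_eq_square)
qed simp

lemma fib_finite:
  assumes a: "a1 \<in> {0,1}" "a2 \<in> {0,1}"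
  shows "finite (fib a1 a2 k)"
proof -
  obtain k0 k1 k2 where k: "k = (k0,k1,k2)" by (cases k) auto
  have "fib a1 a2 k \<subseteq> {- int k0 - 1 .. int k0 + 1} \<times> {- int k2 - 1 .. int k2 + 1}"
  proof
    fix g assume "g \<in> fib a1 a2 k"
    then obtain g1 g2 where g: "g = (g1,g2)" and e0: "nat ((2*g1+a1)^2) = k0" and e2: "nat ((2*g2+a2)^2) = k2"
      by (cases g) (auto simp: fib_def phi_def k)
    have "\<bar>2*g1+a1\<bar> \<le> int k0" using abs_le_sq[of "2*g1+a1"] e0 by simp
    then have "\<bar>g1\<bar> \<le> int k0 + 1" using a by auto
    moreover have "\<bar>2*g2+a2\<bar> \<le> int k2" using abs_le_sq[of "2*g2+a2"] e2 by simp
    then have "\<bar>g2\<bar> \<le> int k2 + 1" using a by auto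
    ultimately show "g \<in> {- int k0 - 1 .. int k0 + 1} \<times> {- int k2 - 1 .. int k2 + 1}"
      using g by auto
  qed
  then show ?thesis by (rule finite_subset) simp
qed

lemma exists_exp:
  assumes a: "a1 \<in> {0,1}" "a2 \<in> {0,1}"
  shows "is_q_expansion (cth a1 a2 b1 b2) (theta_const a1 a2 b1 b2)"
  unfolding is_q_expansion_def
proof
  fix Z assume Z: "Z \<in> siegel_H2"
  obtain q0 q1 q2 where q: "qcoords Z = (q0,q1,q2)" by (cases "qcoords Z") auto
  have S: "(tt a1 a2 b1 b2 Z has_sum theta_const a1 a2 b1 b2 Z) UNIV"
    unfolding theta_tt using tt_summable[OF Z a] by (rule has_sum_infsum)
  have bij: "bij_betw (\<lambda>g. (phi a1 a2 g, g)) UNIV (Sigma UNIV (fib a1 a2))"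
    by (rule bij_betwI[where g=snd]) (auto simp: fib_def)
  have S2: "((\<lambda>(k,g). tt a1 a2 b1 b2 Z g) has_sum theta_const a1 a2 b1 b2 Z) (Sigma UNIV (fib a1 a2))"
    using has_sum_reindex_bij_betw[OF bij, of "\<lambda>(k,g). tt a1 a2 b1 b2 Z g"] S by simp
  have S3: "((\<lambda>k. cth a1 a2 b1 b2 k * qpow (qcoords Z) k) has_sum theta_const a1 a2 b1 b2 Z) UNIV"
  proof (rule has_sum_Sigma'[OF S2])
    fix k :: "nat \<times> nat \<times> nat"
    have "sum (tt a1 a2 b1 b2 Z) (fib a1 a2 k) = sum (\<lambda>g. eps a1 a2 b1 b2 g * qpow (qcoords Z) k) (fib a1 a2 k)"
      by (rule sum.cong) (auto simp: tt_eq fib_def)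
    also have "\<dots> = cth a1 a2 b1 b2 k * qpow (qcoords Z) k"
      unfolding cth_def by (simp add: sum_distrib_right)
    finally show "((\<lambda>y. case (k, y) of (k, g) \<Rightarrow> tt a1 a2 b1 b2 Z g) has_sum cth a1 a2 b1 b2 k * qpow (qcoords Z) k) (fib a1 a2 k)"
      using fib_finite[OF a] by (simp add: has_sum_finiteI)
  qed
  have e: "(\<lambda>k. cth a1 a2 b1 b2 k * qpow (qcoords Z) k) =
     (\<lambda>(k0, k1, k2). cth a1 a2 b1 b2 (k0, k1, k2) * q0 ^ k0 * q1 ^ k1 * q2 ^ k2)"
    by (auto simp: fun_eq_iff qpow_def q mult_ac)
  show "case qcoords Z of (q0, q1, q2) \<Rightarrow>
         ((\<lambda>(k0, k1, k2). cth a1 a2 b1 b2 (k0, k1, k2) * q0 ^ k0 * q1 ^ k1 * q2 ^ k2) has_sum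
          theta_const a1 a2 b1 b2 Z) UNIV"
    using S3[unfolded e] unfolding q by simp
qed



lemma nat_sq0: "nat ((y::int)^2) = 0 \<longleftrightarrow> y = 0"
  by (simp add: nat_eq_iff)
lemma nat_sq1: "nat ((y::int)^2) = 1 \<longleftrightarrow> y = 1 \<or> y = -1"
proof -
  have "nat (y^2) = 1 \<longleftrightarrow> y^2 = 1" by (simp add: nat_eq_iff)
  then show ?thesis by (simp add: power2_eq_1_iff)
qed

lemma sq_ge1: "(y::int) \<noteq> 0 \<Longrightarrow> 1 \<le> y^2"
  using abs_le_sq[of y] by linarith

lemma lower:
  assumes a: "a1 \<in> {0,1}" "a2 \<in> {0,1}" and c: "cth a1 a2 b1 b2 (k0,k1,k2) \<noteq> 0"
  shows "nat a1 \<le> k0 \<and> nat ((a1-a2)^2) \<le> k1 \<and> nat a2 \<le> k2"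
proof -
  have "fib a1 a2 (k0,k1,k2) \<noteq> {}" using c unfolding cth_def by auto
  then obtain g1 g2 where "phi a1 a2 (g1,g2) = (k0,k1,k2)" unfolding fib_def by auto
  then have k: "k0 = nat ((2*g1+a1)^2)" "k1 = nat ((2*(g1-g2)+a1-a2)^2)" "k2 = nat ((2*g2+a2)^2)"
    by (auto simp: phi_def)
  have 0: "nat a1 \<le> k0"
  proof (cases "a1 = 0")
    case False
    then have "a1 = 1" using a by auto
    moreover have "2*g1+a1 \<noteq> 0" using \<open>a1 = 1\<close> by presburger
    ultimately show ?thesis using sq_ge1[of "2*g1+a1"] k by simp
  qed simp
  have 2: "nat a2 \<le> k2"
  proof (cases "a2 = 0")
    case False
    then have "a2 = 1" using a by auto
    moreover have "2*g2+a2 \<noteq> 0" using \<open>a2 = 1\<close> by presburger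
    ultimately show ?thesis using sq_ge1[of "2*g2+a2"] k by simp
  qed simp
  have 1: "nat ((a1-a2)^2) \<le> k1"
  proof (cases "a1 = a2")
    case False
    then have "(a1-a2)^2 = 1" using a by auto
    moreover have "2*(g1-g2)+a1-a2 \<noteq> 0" using a False by auto presburger+
    ultimately show ?thesis using sq_ge1[of "2*(g1-g2)+a1-a2"] k by simp
  qed simp
  show ?thesis using 0 1 2 by simp
qed

lemma odd_sq1: "(2*a+1)*(2*a+1) = (1::int) \<longleftrightarrow> a = 0 \<or> a = -1"
proof -
  have "(2*a+1)*(2*a+1) = (1::int) \<longleftrightarrow> (2*a+1)^2 = 1" by (simp add: power2_eq_square)
  also have "\<dots> \<longleftrightarrow> 2*a+1 = 1 \<or> 2*a+1 = -1" by (rule power2_eq_1_iff)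
  also have "\<dots> \<longleftrightarrow> a = 0 \<or> a = -1" by presburger
  finally show ?thesis .
qed

lemma odd_sq2: "(- (2*a) - 1)*(- (2*a) - 1) = (1::int) \<longleftrightarrow> a = 0 \<or> a = -1"
  using odd_sq1[of a] by (simp add: algebra_simps)

lemma fib_char:
  assumes a: "a1 \<in> {0,1}" "a2 \<in> {0,1}"
  shows "fib a1 a2 (nat a1, nat ((a1-a2)^2), nat a2) = {(0,0), (-a1,-a2)}"
  using a
  by (auto simp: fib_def phi_def nat_sq0 nat_sq1) (auto simp: nat_eq_iff power2_eq_square odd_sq1 odd_sq2)



lemma exp_mpi: "exp (- (complex_of_real pi * \<i>)) = -1"
  by (simp add: exp_minus)

lemma nz:
  assumes a: "a1 \<in> {0,1}" "a2 \<in> {0,1}" and b: "b1 \<in> {0,1}" "b2 \<in> {0,1}"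
    and e: "even (a1 * b1 + a2 * b2)"
  shows "cth a1 a2 b1 b2 (nat a1, nat ((a1-a2)^2), nat a2) \<noteq> 0"
  unfolding cth_def fib_char[OF a]
  using a b e by (auto simp: eps_def exp_mpi)



theorem lemma2p3:
  fixes a1 a2 b1 b2 :: int
  assumes "a1 \<in> {0, 1}" and "a2 \<in> {0, 1}" and "b1 \<in> {0, 1}" and "b2 \<in> {0, 1}"
    and "even (a1 * b1 + a2 * b2)"
  shows "(\<exists>c. is_q_expansion c (theta_const a1 a2 b1 b2)) \<and>
         (\<forall>c. is_q_expansion c (theta_const a1 a2 b1 b2) \<longrightarrow>
            int (mult_q0 c) = a1 \<and> int (mult_q2 c) = a2 \<and>
            int (mult_q1 c) = a1 + a2 - 2 * a1 * a2)"
proof (intro conjI allI impI)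
  have ex: "is_q_expansion (cth a1 a2 b1 b2) (theta_const a1 a2 b1 b2)"
    using exists_exp assms(1,2) .
  then show "\<exists>c. is_q_expansion c (theta_const a1 a2 b1 b2)" by blast
  fix c assume "is_q_expansion c (theta_const a1 a2 b1 b2)"
  then have c: "c = cth a1 a2 b1 b2" using uniq ex by blast
  have nzc: "c (nat a1, nat ((a1-a2)^2), nat a2) \<noteq> 0" using nz[OF assms] c by simp
  have low: "c (k0,k1,k2) \<noteq> 0 \<Longrightarrow> nat a1 \<le> k0 \<and> nat ((a1-a2)^2) \<le> k1 \<and> nat a2 \<le> k2" for k0 k1 k2
    using lower[OF assms(1,2)] c by blast
  have "mult_q0 c = nat a1" unfolding mult_q0_def
    by (rule Least_equality) (use nzc low in blast)+
  then show "int (mult_q0 c) = a1" using assms(1) by auto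
  have "mult_q2 c = nat a2" unfolding mult_q2_def
    by (rule Least_equality) (use nzc low in blast)+
  then show "int (mult_q2 c) = a2" using assms(2) by auto
  have "mult_q1 c = nat ((a1-a2)^2)" unfolding mult_q1_def
    by (rule Least_equality) (use nzc low in blast)+
  then show "int (mult_q1 c) = a1 + a2 - 2 * a1 * a2" using assms(1,2) by auto
qed

end
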